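(* Let $k,n$ be sufficiently large, let $\Phi$ be a quasirandom $k$-CNF on $x_1,\dots,x_n$ and let $\mathcal M$ be a mist of $\Phi$ satisfying (Q1)–(Q3). Let $\omega=\lceil\exp(n/k^2)\rceil$, consider the run $(\sigma^{[t]})$ of Walksat$(\Phi,\omega)$ and let $\mathcal A$ be the event $\sigma^{[0]}\notin\mathcal D(\Phi,\mathcal M)$. Let $\tau_1\notin T(\Phi)$ and $\mu\in\mathcal M$ be such that $\mathrm{dist}(\tau_1,\mu)=\lfloor10\kappa n\rfloor$. Then for all $1\le t_1\le t_2\le\omega$, $$\Pr\big[H_\mu(t_1,t_2)\,\big|\,\mathcal A,\ \sigma^{[t_1]}=\tau_1\big]\le\exp(-\kappa n/2).$$
   Context: $\Phi=\Phi_1\wedge\dots\wedge\Phi_m$ with clauses $\Phi_i=\Phi_{i1}\vee\dots\vee\Phi_{ik}$; $|\Phi_{ij}|$ is the variable of literal $\Phi_{ij}$. $\rho=2^{-k}m/n$, $\kappa=\ln k/k$. $U_\Phi(\sigma)$ is the set of indices of clauses unsatisfied by $\sigma$, $\mathcal U_\Phi(\sigma)=|U_\Phi(\sigma)|$, $T(\Phi)=\{\tau:\mathcal U_\Phi(\tau)\le n\rho/10\}$. $\mathrm{dist}$ is Hamming distance, $\Delta(\sigma,\tau)$ the set of variables where $\sigma,\tau$ differ, $\mathcal D_\sigma(r_1,r_2)=\{\tau:\lfloor r_1\kappa n\rfloor\le\mathrm{dist}(\sigma,\tau)\le\lfloor r_2\kappa n\rfloor\}$, $X_\Phi(W,\sigma)=\sum_{i\in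 U_\Phi(\sigma)}\sum_{j\in[k]}\mathbf 1\{|\Phi_{ij}|\in W\}$. A mist is $\mathcal M\subseteq T(\Phi)$ with pairwise distances at least $2\kappa n$ such that every $\sigma\in T(\Phi)$ is within distance $2\kappa n$ of some element of $\mathcal M$; $\mathcal D(\Phi,\mathcal M)=\bigcup_{\sigma\in\mathcal M}\mathcal D_\sigma(0,10)$. Conditions: (Q1) $|\mathcal D(\Phi,\mathcal M)|\le2^n\exp(-2n/k^2)$; (Q2) $|\mathcal M\cap\mathcal D_\tau(0,10)|\le k$ for all $\tau$; (Q3) for all $\mu\in\mathcal M$, $\sigma\in\mathcal D_\mu(0,100)\setminus T(\Phi)$: $X_\Phi(\Delta(\mu,\sigma),\sigma)\le k\,\mathcal U_\Phi(\sigma)/10$. $\Phi$ is quasirandom if such a mist exists. Walksat$(\Phi,\omega)$: $\sigma^{[0]}$ uniform; at each step $i\le\omega$, halt if $\sigma^{[i]}$ satisfies $\Phi$, otherwise pick a uniformly random unsatisfied clause and uniformly random position $j\in[k]$ and flip that literal's variable to get $\sigma^{[i+1]}$. $H_\mu(t_1,t_2)$ is the event that $\mathrm{dist}(\sigma^{[t_1]},\mu)=\lfloor10\kappa n\rfloor$, $\mathrm{dist}(\sigma^{[t_2]},\mu)=\lfloor5\kappa n\rfloor$, and $\sigma^{[t]}\in\mathcal D_\mu(5,10)\setminus T(\Phi)$ for all $t_1\le t\le t_2$. *)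

theory Defs
  imports "HOL-Probability.Probability"
begin

text \<open>Variables are 0,...,n-1. A literal is a pair (variable, sign); it is true under
  sigma iff sigma (variable) = sign.\<close>

type_synonym lit = "nat \<times> bool"
type_synonym clause = "lit list"
type_synonym cnf = "clause list"
type_synonym assignment = "nat \<Rightarrow> bool"

definition assigns :: "nat \<Rightarrow> assignment set" where
  "assigns n = {\<sigma>. \<forall>i. n \<le> i \<longrightarrow> \<not> \<sigma> i}"

definition kcnf :: "nat \<Rightarrow> nat \<Rightarrow> cnf \<Rightarrow> bool" where
  "kcnf n k \<Phi> \<longleftrightarrow> (\<forall>c\<in>set \<Phi>. length c = k \<and> (\<forall>l\<in>set c. fst l < n))"

definition rho :: "nat \<Rightarrow> nat \<Rightarrow> cnf \<Rightarrow> real" where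
  "rho n k \<Phi> = real (length \<Phi>) / (2 ^ k * real n)"

definition kappa :: "nat \<Rightarrow> real" where
  "kappa k = ln (real k) / real k"

definition unsat_idx :: "cnf \<Rightarrow> assignment \<Rightarrow> nat set" where
  "unsat_idx \<Phi> \<sigma> = {i. i < length \<Phi> \<and> (\<forall>l\<in>set (\<Phi> ! i). \<sigma> (fst l) \<noteq> snd l)}"

definition numU :: "cnf \<Rightarrow> assignment \<Rightarrow> nat" where
  "numU \<Phi> \<sigma> = card (unsat_idx \<Phi> \<sigma>)"

definition Tset :: "nat \<Rightarrow> nat \<Rightarrow> cnf \<Rightarrow> assignment set" where
  "Tset n k \<Phi> = {\<tau> \<in> assigns n. real (numU \<Phi> \<tau>) \<le> real n * rho n k \<Phi> / 10}"

definition Delta :: "nat \<Rightarrow> assignment \<Rightarrow> assignment \<Rightarrow> nat set" where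
  "Delta n \<sigma> \<tau> = {i. i < n \<and> \<sigma> i \<noteq> \<tau> i}"

definition hdist :: "nat \<Rightarrow> assignment \<Rightarrow> assignment \<Rightarrow> nat" where
  "hdist n \<sigma> \<tau> = card (Delta n \<sigma> \<tau>)"

definition Dball :: "nat \<Rightarrow> nat \<Rightarrow> assignment \<Rightarrow> real \<Rightarrow> real \<Rightarrow> assignment set" where
  "Dball n k \<sigma> r1 r2 = {\<tau> \<in> assigns n.
      \<lfloor>r1 * kappa k * real n\<rfloor> \<le> int (hdist n \<sigma> \<tau>) \<and> int (hdist n \<sigma> \<tau>) \<le> \<lfloor>r2 * kappa k * real n\<rfloor>}"

definition Xcnt :: "nat \<Rightarrow> cnf \<Rightarrow> nat set \<Rightarrow> assignment \<Rightarrow> nat" where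
  "Xcnt k \<Phi> W \<sigma> = (\<Sum>i\<in>unsat_idx \<Phi> \<sigma>. \<Sum>j<k. if fst (\<Phi> ! i ! j) \<in> W then 1 else 0)"

definition is_mist :: "nat \<Rightarrow> nat \<Rightarrow> cnf \<Rightarrow> assignment set \<Rightarrow> bool" where
  "is_mist n k \<Phi> M \<longleftrightarrow> M \<subseteq> Tset n k \<Phi>
     \<and> (\<forall>\<sigma>\<in>M. \<forall>\<tau>\<in>M. \<sigma> \<noteq> \<tau> \<longrightarrow> 2 * kappa k * real n \<le> real (hdist n \<sigma> \<tau>))
     \<and> (\<forall>\<sigma>\<in>Tset n k \<Phi>. \<exists>\<mu>\<in>M. real (hdist n \<sigma> \<mu>) \<le> 2 * kappa k * real n)"

definition Dmist :: "nat \<Rightarrow> nat \<Rightarrow> assignment set \<Rightarrow> assignment set" where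
  "Dmist n k M = (\<Union>\<sigma>\<in>M. Dball n k \<sigma> 0 10)"

definition Q1 :: "nat \<Rightarrow> nat \<Rightarrow> assignment set \<Rightarrow> bool" where
  "Q1 n k M \<longleftrightarrow> real (card (Dmist n k M)) \<le> 2 ^ n * exp (- 2 * real n / (real k)\<^sup>2)"

definition Q2 :: "nat \<Rightarrow> nat \<Rightarrow> assignment set \<Rightarrow> bool" where
  "Q2 n k M \<longleftrightarrow> (\<forall>\<tau>\<in>assigns n. card (M \<inter> Dball n k \<tau> 0 10) \<le> k)"

definition Q3 :: "nat \<Rightarrow> nat \<Rightarrow> cnf \<Rightarrow> assignment set \<Rightarrow> bool" where
  "Q3 n k \<Phi> M \<longleftrightarrow> (\<forall>\<mu>\<in>M. \<forall>\<sigma>\<in>Dball n k \<mu> 0 100 - Tset n k \<Phi>.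
      real (Xcnt k \<Phi> (Delta n \<mu> \<sigma>) \<sigma>) \<le> real k * real (numU \<Phi> \<sigma>) / 10)"

definition flip :: "assignment \<Rightarrow> nat \<Rightarrow> assignment" where
  "flip \<sigma> v = \<sigma>(v := \<not> \<sigma> v)"

definition walk_step :: "nat \<Rightarrow> cnf \<Rightarrow> assignment \<Rightarrow> assignment pmf" where
  "walk_step k \<Phi> \<sigma> = (if unsat_idx \<Phi> \<sigma> = {} then return_pmf \<sigma> else
     bind_pmf (pmf_of_set (unsat_idx \<Phi> \<sigma>)) (\<lambda>i.
     bind_pmf (pmf_of_set {..<k}) (\<lambda>j.
     return_pmf (flip \<sigma> (fst (\<Phi> ! i ! j))))))"

text \<open>Distribution of the trajectory [sigma^[0], ..., sigma^[N]]; after halting the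
  assignment stays constant.\<close>
fun walk_traj :: "nat \<Rightarrow> nat \<Rightarrow> cnf \<Rightarrow> nat \<Rightarrow> assignment list pmf" where
  "walk_traj n k \<Phi> 0 = map_pmf (\<lambda>\<sigma>. [\<sigma>]) (pmf_of_set (assigns n))"
| "walk_traj n k \<Phi> (Suc N) = bind_pmf (walk_traj n k \<Phi> N)
     (\<lambda>xs. map_pmf (\<lambda>\<sigma>'. xs @ [\<sigma>']) (walk_step k \<Phi> (last xs)))"

definition Hevent :: "nat \<Rightarrow> nat \<Rightarrow> cnf \<Rightarrow> assignment \<Rightarrow> nat \<Rightarrow> nat \<Rightarrow> assignment list set" where
  "Hevent n k \<Phi> \<mu> t1 t2 = {xs.
      int (hdist n (xs ! t1) \<mu>) = \<lfloor>10 * kappa k * real n\<rfloor>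
    \<and> int (hdist n (xs ! t2) \<mu>) = \<lfloor>5 * kappa k * real n\<rfloor>
    \<and> (\<forall>t. t1 \<le> t \<and> t \<le> t2 \<longrightarrow> xs ! t \<in> Dball n k \<mu> 5 10 - Tset n k \<Phi>)}"

definition cond_prob :: "'a pmf \<Rightarrow> 'a set \<Rightarrow> 'a set \<Rightarrow> real" where
  "cond_prob p E C = measure_pmf.prob p (E \<inter> C) / measure_pmf.prob p C"

end

theory Submission
  imports Defs
begin


lemma traj_len: "xs \<in> set_pmf (walk_traj n k \<Phi> N) \<Longrightarrow> length xs = Suc N"
  by (induction N arbitrary: xs) auto

lemma traj_inv:
  assumes "\<forall>xs \<sigma>. N < length xs \<longrightarrow> f (xs @ [\<sigma>]) = f xs"
  shows "(\<integral>\<^sup>+xs. f xs \<partial>walk_traj n k \<Phi> (N+m)) = (\<integral>\<^sup>+xs. f xs \<partial>walk_traj n k \<Phi> N)"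
proof (induction m)
  case 0 then show ?case by simp
next
  case (Suc m)
  have "(\<integral>\<^sup>+xs. f xs \<partial>walk_traj n k \<Phi> (N+Suc m)) =
     (\<integral>\<^sup>+xs. (\<integral>\<^sup>+\<sigma>. f (xs @ [\<sigma>]) \<partial>walk_step k \<Phi> (last xs)) \<partial>walk_traj n k \<Phi> (N+m))"
    by simp
  also have "\<dots> = (\<integral>\<^sup>+xs. f xs \<partial>walk_traj n k \<Phi> (N+m))"
  proof (rule nn_integral_cong_AE)
    show "AE xs in measure_pmf (walk_traj n k \<Phi> (N + m)). (\<integral>\<^sup>+\<sigma>. f (xs @ [\<sigma>]) \<partial>walk_step k \<Phi> (last xs)) = f xs"
      unfolding AE_measure_pmf_iff
    proof
      fix xs assume "xs \<in> set_pmf (walk_traj n k \<Phi> (N + m))"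
      then have "N < length xs" using traj_len by fastforce
      then show "(\<integral>\<^sup>+\<sigma>. f (xs @ [\<sigma>]) \<partial>walk_step k \<Phi> (last xs)) = f xs"
        using assms by (simp add: measure_pmf.emeasure_space_1)
    qed
  qed
  finally show ?case using Suc by simp
qed

lemma hdist_sym: "hdist n x y = hdist n y x"
  unfolding hdist_def Delta_def by (metis (no_types, lifting))

lemma Delta_fin: "finite (Delta n \<sigma> \<mu>)"
  by (rule finite_subset[of _ "{..<n}"]) (auto simp: Delta_def)

lemma hdist_flip_in: "v < n \<Longrightarrow> \<sigma> v \<noteq> \<mu> v \<Longrightarrow> int (hdist n (flip \<sigma> v) \<mu>) = int (hdist n \<sigma> \<mu>) - 1"
proof -
  assume a: "v < n" "\<sigma> v \<noteq> \<mu> v"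
  have "Delta n (flip \<sigma> v) \<mu> = Delta n \<sigma> \<mu> - {v}" using a by (auto simp: Delta_def flip_def)
  moreover have "v \<in> Delta n \<sigma> \<mu>" using a by (auto simp: Delta_def)
  moreover have "1 \<le> card (Delta n \<sigma> \<mu>)"
    using \<open>v \<in> Delta n \<sigma> \<mu>\<close> Delta_fin card_gt_0_iff by (metis Suc_leI One_nat_def empty_iff)
  ultimately show ?thesis unfolding hdist_def using Delta_fin[of n \<sigma> \<mu>]
    by (simp add: card_Diff_singleton of_nat_diff)
qed

lemma hdist_flip_out: "v < n \<Longrightarrow> \<sigma> v = \<mu> v \<Longrightarrow> int (hdist n (flip \<sigma> v) \<mu>) = int (hdist n \<sigma> \<mu>) + 1"
proof -
  assume a: "v < n" "\<sigma> v = \<mu> v"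
  have "Delta n (flip \<sigma> v) \<mu> = insert v (Delta n \<sigma> \<mu>)" using a by (auto simp: Delta_def flip_def)
  moreover have "v \<notin> Delta n \<sigma> \<mu>" using a by (auto simp: Delta_def)
  ultimately show ?thesis unfolding hdist_def using Delta_fin by simp
qed

lemma W_flip:
  fixes A :: int
  assumes "v < n"
  shows "3 powr real_of_int (A - int (hdist n (flip \<sigma> v) \<mu>)) =
    3 powr real_of_int (A - int (hdist n \<sigma> \<mu>)) * (if v \<in> Delta n \<mu> \<sigma> then 3 else 1/3)"
proof (cases "\<sigma> v = \<mu> v")
  case True
  then have "v \<notin> Delta n \<mu> \<sigma>" by (auto simp: Delta_def)
  have "real_of_int (A - int (hdist n (flip \<sigma> v) \<mu>)) = real_of_int (A - int (hdist n \<sigma> \<mu>)) - 1"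
    using hdist_flip_out[of v n \<sigma> \<mu>, OF assms True] by simp
  have "3 powr real_of_int (A - int (hdist n (flip \<sigma> v) \<mu>)) = 3 powr real_of_int (A - int (hdist n \<sigma> \<mu>)) / 3"
  proof -
    have "3 powr real_of_int (A - int (hdist n (flip \<sigma> v) \<mu>)) = 3 powr (real_of_int (A - int (hdist n \<sigma> \<mu>)) - 1)"
      by (simp only: \<open>real_of_int (A - int (hdist n (flip \<sigma> v) \<mu>)) = real_of_int (A - int (hdist n \<sigma> \<mu>)) - 1\<close>)
    also have "\<dots> = 3 powr real_of_int (A - int (hdist n \<sigma> \<mu>)) / 3"
      by (simp only: powr_diff) simp
    finally show ?thesis .
  qed
  with \<open>v \<notin> Delta n \<mu> \<sigma>\<close> show ?thesis by simp
next
  case False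
  then have "v \<in> Delta n \<mu> \<sigma>" using assms by (auto simp: Delta_def)
  have "real_of_int (A - int (hdist n (flip \<sigma> v) \<mu>)) = real_of_int (A - int (hdist n \<sigma> \<mu>)) + 1"
    using hdist_flip_in[of v n \<sigma> \<mu>, OF assms False] by simp
  have "3 powr real_of_int (A - int (hdist n (flip \<sigma> v) \<mu>)) = 3 powr real_of_int (A - int (hdist n \<sigma> \<mu>)) * 3"
  proof -
    have "3 powr real_of_int (A - int (hdist n (flip \<sigma> v) \<mu>)) = 3 powr (real_of_int (A - int (hdist n \<sigma> \<mu>)) + 1)"
      by (simp only: \<open>real_of_int (A - int (hdist n (flip \<sigma> v) \<mu>)) = real_of_int (A - int (hdist n \<sigma> \<mu>)) + 1\<close>)
    also have "\<dots> = 3 powr real_of_int (A - int (hdist n \<sigma> \<mu>)) * 3"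
      by (simp only: powr_add) simp
    finally show ?thesis .
  qed
  with \<open>v \<in> Delta n \<mu> \<sigma>\<close> show ?thesis by simp
qed

lemma ennreal_div_nat: "0 \<le> x \<Longrightarrow> 0 < m \<Longrightarrow> ennreal x / of_nat m = ennreal (x / real m)"
  by (simp add: ennreal_of_nat_eq_real_of_nat divide_ennreal)

lemma step_bound:
  fixes A :: int
  assumes kc: "kcnf n k \<Phi>" and k: "0 < k" and q3: "Q3 n k \<Phi> M" and mu: "\<mu> \<in> M"
    and sig: "\<sigma> \<in> Dball n k \<mu> 0 100" and nT: "\<sigma> \<notin> Tset n k \<Phi>"
  shows "(\<integral>\<^sup>+x. ennreal (3 powr real_of_int (A - int (hdist n x \<mu>))) \<partial>walk_step k \<Phi> \<sigma>)
     \<le> ennreal (3 powr real_of_int (A - int (hdist n \<sigma> \<mu>)))"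
proof -
  define U where "U = unsat_idx \<Phi> \<sigma>"
  define W where "W = (\<lambda>x. 3 powr real_of_int (A - int (hdist n x \<mu>)))"
  define v where "v = (\<lambda>i j. fst (\<Phi> ! i ! j))"
  define D where "D = Delta n \<mu> \<sigma>"
  have W0: "\<And>x. 0 \<le> W x" unfolding W_def by simp
  have finU: "finite U" unfolding U_def unsat_idx_def
    by (rule finite_subset[of _ "{..<length \<Phi>}"]) auto
  have sa: "\<sigma> \<in> assigns n" using sig by (simp add: Dball_def)
  have rho0: "0 \<le> rho n k \<Phi>" by (simp add: rho_def)
  have "\<not> real (numU \<Phi> \<sigma>) \<le> real n * rho n k \<Phi> / 10" using nT sa by (simp add: Tset_def)
  moreover have "0 \<le> real n * rho n k \<Phi> / 10" using rho0 by simp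
  ultimately have cU: "0 < card U" unfolding numU_def U_def by linarith
  then have Une: "U \<noteq> {}" by auto
  have kne: "{..<k} \<noteq> {}" using k by auto
  have vn: "v i j < n" if "i \<in> U" "j < k" for i j
  proof -
    have "i < length \<Phi>" using that unfolding U_def unsat_idx_def by simp
    then have "\<Phi> ! i \<in> set \<Phi>" by simp
    then have "length (\<Phi> ! i) = k" "\<forall>l\<in>set (\<Phi> ! i). fst l < n" using kc by (auto simp: kcnf_def)
    then show ?thesis using that unfolding v_def by (metis nth_mem)
  qed
  have Wf: "W (flip \<sigma> (v i j)) = W \<sigma> * (if v i j \<in> D then 3 else 1/3)" if "i \<in> U" "j < k" for i j
    unfolding W_def D_def by (rule W_flip[OF vn[OF that]])
  have step: "walk_step k \<Phi> \<sigma> = bind_pmf (pmf_of_set U) (\<lambda>i. bind_pmf (pmf_of_set {..<k}) (\<lambda>j. return_pmf (flip \<sigma> (v i j))))"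
    using Une by (simp add: walk_step_def U_def v_def)
  have "(\<integral>\<^sup>+x. ennreal (W x) \<partial>walk_step k \<Phi> \<sigma>) = (\<Sum>i\<in>U. (\<Sum>j<k. ennreal (W (flip \<sigma> (v i j)))) / of_nat k) / of_nat (card U)"
    unfolding step using Une finU kne by (simp add: nn_integral_pmf_of_set)
  also have "\<dots> = (\<Sum>i\<in>U. ennreal ((\<Sum>j<k. W (flip \<sigma> (v i j))) / real k)) / of_nat (card U)"
    using W0 k by (simp add: ennreal_div_nat sum_nonneg)
  also have "\<dots> = ennreal ((\<Sum>i\<in>U. (\<Sum>j<k. W (flip \<sigma> (v i j))) / real k) / real (card U))"
    using W0 cU by (simp add: ennreal_div_nat sum_nonneg)
  also have "\<dots> \<le> ennreal (W \<sigma>)"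
  proof (rule ennreal_leI)
    have e1: "(\<Sum>i\<in>U. \<Sum>j<k. W (flip \<sigma> (v i j))) = (\<Sum>i\<in>U. \<Sum>j<k. W \<sigma> * (1/3 + 8/3 * (if v i j \<in> D then 1 else 0)))"
      by (intro sum.cong refl) (simp add: Wf)
    also have "\<dots> = W \<sigma> * (real k * real (card U) / 3 + 8/3 * (\<Sum>i\<in>U. \<Sum>j<k. (if v i j \<in> D then 1 else 0)))"
      by (simp add: sum_distrib_left sum.distrib algebra_simps sum_distrib_right)
    also have "(\<Sum>i\<in>U. \<Sum>j<k. (if v i j \<in> D then 1 else 0 :: real)) = real (Xcnt k \<Phi> D \<sigma>)"
      unfolding Xcnt_def U_def v_def of_nat_sum by (intro sum.cong refl) simp
    finally have e2: "(\<Sum>i\<in>U. \<Sum>j<k. W (flip \<sigma> (v i j))) = W \<sigma> * (real k * real (card U) / 3 + 8/3 * real (Xcnt k \<Phi> D \<sigma>))" .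
    have "real (Xcnt k \<Phi> D \<sigma>) \<le> real k * real (card U) / 10"
      using q3 mu sig nT unfolding Q3_def D_def numU_def U_def by blast
    then have "real k * real (card U) / 3 + 8/3 * real (Xcnt k \<Phi> D \<sigma>) \<le> real k * real (card U)"
      by simp
    then have "(\<Sum>i\<in>U. \<Sum>j<k. W (flip \<sigma> (v i j))) \<le> W \<sigma> * (real k * real (card U))"
      unfolding e2 using W0 by (simp add: mult_left_mono)
    moreover have "0 < real k * real (card U)" using k cU by simp
    ultimately have "(\<Sum>i\<in>U. \<Sum>j<k. W (flip \<sigma> (v i j))) / (real k * real (card U)) \<le> W \<sigma>"
      by (simp add: divide_le_eq)
    then show "(\<Sum>i\<in>U. (\<Sum>j<k. W (flip \<sigma> (v i j))) / real k) / real (card U) \<le> W \<sigma>"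
      by (simp add: sum_divide_distrib[symmetric] divide_divide_eq_left)
  qed
  finally show ?thesis unfolding W_def .
qed



lemma nth_app: "t < length xs \<Longrightarrow> (xs @ ys) ! t = xs ! t"
  by (simp add: nth_append)

theorem mainTheorem6:
  "\<exists>k0. \<forall>k\<ge>k0. \<exists>n0. \<forall>n\<ge>n0. \<forall>\<Phi> M \<tau>1 \<mu> t1 t2.
     kcnf n k \<Phi> \<and> is_mist n k \<Phi> M \<and> Q1 n k M \<and> Q2 n k M \<and> Q3 n k \<Phi> M
     \<and> \<tau>1 \<in> assigns n \<and> \<tau>1 \<notin> Tset n k \<Phi> \<and> \<mu> \<in> M
     \<and> int (hdist n \<tau>1 \<mu>) = \<lfloor>10 * kappa k * real n\<rfloor>
     \<and> 1 \<le> t1 \<and> t1 \<le> t2 \<and> t2 \<le> nat \<lceil>exp (real n / (real k)\<^sup>2)\<rceil>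
     \<longrightarrow> cond_prob (walk_traj n k \<Phi> (nat \<lceil>exp (real n / (real k)\<^sup>2)\<rceil>))
           (Hevent n k \<Phi> \<mu> t1 t2)
           {xs. xs ! 0 \<notin> Dmist n k M \<and> xs ! t1 = \<tau>1}
         \<le> exp (- kappa k * real n / 2)"
proof (rule exI[of _ 3], intro allI impI)
  fix k :: nat assume k3: "3 \<le> k"
  define \<kappa> where "\<kappa> = kappa k"
  have kpos: "0 < \<kappa>" using k3 unfolding \<kappa>_def kappa_def by (simp add: ln_gt_zero)
  show "\<exists>n0. \<forall>n\<ge>n0. \<forall>\<Phi> M \<tau>1 \<mu> t1 t2.
     kcnf n k \<Phi> \<and> is_mist n k \<Phi> M \<and> Q1 n k M \<and> Q2 n k M \<and> Q3 n k \<Phi> M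
     \<and> \<tau>1 \<in> assigns n \<and> \<tau>1 \<notin> Tset n k \<Phi> \<and> \<mu> \<in> M
     \<and> int (hdist n \<tau>1 \<mu>) = \<lfloor>10 * kappa k * real n\<rfloor>
     \<and> 1 \<le> t1 \<and> t1 \<le> t2 \<and> t2 \<le> nat \<lceil>exp (real n / (real k)\<^sup>2)\<rceil>
     \<longrightarrow> cond_prob (walk_traj n k \<Phi> (nat \<lceil>exp (real n / (real k)\<^sup>2)\<rceil>))
           (Hevent n k \<Phi> \<mu> t1 t2)
           {xs. xs ! 0 \<notin> Dmist n k M \<and> xs ! t1 = \<tau>1}
         \<le> exp (- kappa k * real n / 2)"
  proof (rule exI[of _ "nat \<lceil>2 / \<kappa>\<rceil>"], intro allI impI)
    fix n :: nat and \<Phi> M \<tau>1 \<mu> t1 t2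
    assume n0: "nat \<lceil>2 / \<kappa>\<rceil> \<le> n"
    assume hyp: "kcnf n k \<Phi> \<and> is_mist n k \<Phi> M \<and> Q1 n k M \<and> Q2 n k M \<and> Q3 n k \<Phi> M
     \<and> \<tau>1 \<in> assigns n \<and> \<tau>1 \<notin> Tset n k \<Phi> \<and> \<mu> \<in> M
     \<and> int (hdist n \<tau>1 \<mu>) = \<lfloor>10 * kappa k * real n\<rfloor>
     \<and> 1 \<le> t1 \<and> t1 \<le> t2 \<and> t2 \<le> nat \<lceil>exp (real n / (real k)\<^sup>2)\<rceil>"
    then have kc: "kcnf n k \<Phi>" and q3: "Q3 n k \<Phi> M" and mu: "\<mu> \<in> M"
      and h\<tau>: "int (hdist n \<tau>1 \<mu>) = \<lfloor>10 * \<kappa> * real n\<rfloor>"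
      and t12: "t1 \<le> t2" and t2w: "t2 \<le> nat \<lceil>exp (real n / (real k)\<^sup>2)\<rceil>"
      unfolding \<kappa>_def by auto
    have kn: "2 \<le> \<kappa> * real n"
    proof -
      have "2 / \<kappa> \<le> real n" using n0 by linarith
      then show ?thesis using kpos by (simp add: field_simps)
    qed
    have k0: "0 < k" using k3 by simp
    define \<omega> where "\<omega> = nat \<lceil>exp (real n / (real k)\<^sup>2)\<rceil>"
    define a where "a = \<lfloor>10 * \<kappa> * real n\<rfloor>"
    define b where "b = \<lfloor>5 * \<kappa> * real n\<rfloor>"
    define C where "C = {xs. xs ! 0 \<notin> Dmist n k M \<and> xs ! t1 = \<tau>1}"
    define H where "H = Hevent n k \<Phi> \<mu> t1 t2"
    define R where "R = Dball n k \<mu> 5 10 - Tset n k \<Phi>"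
    define W where "W = (\<lambda>x. 3 powr real_of_int (a - int (hdist n x \<mu>)))"
    define G where "G = (\<lambda>N xs. indicator C xs * (if (\<forall>t. t1 \<le> t \<and> t < N \<longrightarrow> xs ! t \<in> R) then 1 else 0)
                  * ennreal (W (xs ! N)))"
    define T where "T = walk_traj n k \<Phi>"
    have RD: "R \<subseteq> Dball n k \<mu> 0 100 - Tset n k \<Phi>"
    proof
      fix x assume "x \<in> R"
      then have "x \<in> assigns n" "int (hdist n x \<mu>) \<le> \<lfloor>10 * \<kappa> * real n\<rfloor>" "x \<notin> Tset n k \<Phi>"
        unfolding R_def Dball_def \<kappa>_def by (auto simp: hdist_sym)
      moreover have "\<lfloor>10 * \<kappa> * real n\<rfloor> \<le> \<lfloor>100 * \<kappa> * real n\<rfloor>"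
        using kpos by (intro floor_mono) (simp add: mult_right_mono)
      ultimately show "x \<in> Dball n k \<mu> 0 100 - Tset n k \<Phi>"
        unfolding Dball_def \<kappa>_def by (auto simp: hdist_sym)
    qed
    have Wstep: "(\<integral>\<^sup>+x. ennreal (W x) \<partial>walk_step k \<Phi> \<sigma>) \<le> ennreal (W \<sigma>)" if "\<sigma> \<in> R" for \<sigma>
      unfolding W_def using step_bound[OF kc k0 q3 mu, of \<sigma> a] that RD by blast
    have base: "(\<integral>\<^sup>+xs. G t1 xs \<partial>T t1) = emeasure (T t1) C"
    proof -
      have "G t1 xs = indicator C xs" for xs
      proof (cases "xs \<in> C")
        case True
        then have "W (xs ! t1) = 1" unfolding C_def W_def a_def using h\<tau> by simp
        then show ?thesis using True unfolding G_def by simp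
      qed (simp add: G_def)
      then show ?thesis by simp
    qed
    have ind: "(\<integral>\<^sup>+xs. G (t1 + m) xs \<partial>T (t1 + m)) \<le> emeasure (T t1) C" for m
    proof (induction m)
      case 0 then show ?case using base by simp
    next
      case (Suc m)
      define N where "N = t1 + m"
      have "(\<integral>\<^sup>+xs. G (t1 + Suc m) xs \<partial>T (t1 + Suc m)) =
         (\<integral>\<^sup>+xs. (\<integral>\<^sup>+\<sigma>. G (Suc N) (xs @ [\<sigma>]) \<partial>walk_step k \<Phi> (last xs)) \<partial>T N)"
        by (simp add: T_def N_def)
      also have "\<dots> \<le> (\<integral>\<^sup>+xs. G N xs \<partial>T N)"
      proof (rule nn_integral_mono_AE)
        show "AE xs in measure_pmf (T N). (\<integral>\<^sup>+\<sigma>. G (Suc N) (xs @ [\<sigma>]) \<partial>walk_step k \<Phi> (last xs)) \<le> G N xs"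
          unfolding AE_measure_pmf_iff
        proof
          fix xs assume "xs \<in> set_pmf (T N)"
          then have len: "length xs = Suc N" unfolding T_def using traj_len by blast
          have t1N: "t1 \<le> N" unfolding N_def by simp
          have lastx: "last xs = xs ! N"
          proof -
            have "xs \<noteq> []" using len by auto
            then show ?thesis using len by (simp add: last_conv_nth)
          qed
          have Cx: "indicator C (xs @ [\<sigma>]) = (indicator C xs :: ennreal)" for \<sigma>
            using len t1N by (simp add: C_def nth_app indicator_def)
          have cond: "(\<forall>t. t1 \<le> t \<and> t < Suc N \<longrightarrow> (xs @ [\<sigma>]) ! t \<in> R) \<longleftrightarrow>
                 ((\<forall>t. t1 \<le> t \<and> t < N \<longrightarrow> xs ! t \<in> R) \<and> xs ! N \<in> R)" for \<sigma>
            using len t1N by (auto simp: nth_app less_Suc_eq)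
          have lastS: "(xs @ [\<sigma>]) ! Suc N = \<sigma>" for \<sigma> using len nth_append_length[of xs \<sigma> "[]"] by simp
          show "(\<integral>\<^sup>+\<sigma>. G (Suc N) (xs @ [\<sigma>]) \<partial>walk_step k \<Phi> (last xs)) \<le> G N xs"
          proof (cases "xs \<in> C \<and> (\<forall>t. t1 \<le> t \<and> t < N \<longrightarrow> xs ! t \<in> R) \<and> xs ! N \<in> R")
            case True
            then have "(\<integral>\<^sup>+\<sigma>. G (Suc N) (xs @ [\<sigma>]) \<partial>walk_step k \<Phi> (last xs)) =
                  (\<integral>\<^sup>+\<sigma>. ennreal (W \<sigma>) \<partial>walk_step k \<Phi> (xs ! N))"
              unfolding G_def using Cx cond lastS lastx by simp
            also have "\<dots> \<le> ennreal (W (xs ! N))" using Wstep True by blast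
            also have "\<dots> = G N xs" using True unfolding G_def by simp
            finally show ?thesis .
          next
            case False
            then have "G (Suc N) (xs @ [\<sigma>]) = 0" for \<sigma>
              unfolding G_def using Cx[of \<sigma>] cond[of \<sigma>] by (auto simp: indicator_def)
            then show ?thesis by simp
          qed
        qed
      qed
      also have "\<dots> \<le> emeasure (T t1) C" using Suc by (simp add: N_def)
      finally show ?case .
    qed
    have t2eq: "t2 = t1 + (t2 - t1)" using t12 by simp
    have Gt2: "(\<integral>\<^sup>+xs. G t2 xs \<partial>T t2) \<le> emeasure (T t1) C"
      using ind[of "t2 - t1"] t2eq by simp
    have hb: "\<And>xs. xs \<in> H \<Longrightarrow> int (hdist n (xs ! t2) \<mu>) = b"
      unfolding H_def Hevent_def b_def \<kappa>_def by auto
    have pw: "ennreal (3 powr real_of_int (a - b)) * indicator (H \<inter> C) xs \<le> G t2 xs" for xs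
    proof (cases "xs \<in> H \<inter> C")
      case True
      then have "\<forall>t. t1 \<le> t \<and> t < t2 \<longrightarrow> xs ! t \<in> R"
        unfolding H_def Hevent_def R_def by auto
      then show ?thesis using True hb[of xs] unfolding G_def W_def by simp
    qed simp
    have "ennreal (3 powr real_of_int (a - b)) * emeasure (T t2) (H \<inter> C)
        = (\<integral>\<^sup>+xs. ennreal (3 powr real_of_int (a - b)) * indicator (H \<inter> C) xs \<partial>T t2)"
      by (simp add: nn_integral_cmult_indicator)
    also have "\<dots> \<le> (\<integral>\<^sup>+xs. G t2 xs \<partial>T t2)" by (intro nn_integral_mono pw)
    also have "\<dots> \<le> emeasure (T t1) C" by (rule Gt2)
    finally have main: "ennreal (3 powr real_of_int (a - b)) * emeasure (T t2) (H \<inter> C) \<le> emeasure (T t1) C" .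
    have eHC: "emeasure (T \<omega>) (H \<inter> C) = emeasure (T t2) (H \<inter> C)"
    proof -
      have "(\<integral>\<^sup>+xs. indicator (H \<inter> C) xs \<partial>T (t2 + (\<omega> - t2))) = (\<integral>\<^sup>+xs. indicator (H \<inter> C) xs \<partial>T t2)"
        unfolding T_def
      proof (rule traj_inv, intro allI impI)
        fix xs :: "assignment list" and \<sigma> assume l: "t2 < length xs"
        have e: "\<And>t. t \<le> t2 \<Longrightarrow> (xs @ [\<sigma>]) ! t = xs ! t" using l by (simp add: nth_app)
        have "xs @ [\<sigma>] \<in> H \<inter> C \<longleftrightarrow> xs \<in> H \<inter> C"
          using t12 by (auto simp: H_def C_def Hevent_def e)
        then show "indicator (H \<inter> C) (xs @ [\<sigma>]) = (indicator (H \<inter> C) xs :: ennreal)"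
          by (simp add: indicator_def)
      qed
      moreover have "t2 + (\<omega> - t2) = \<omega>" using t2w unfolding \<omega>_def by simp
      ultimately show ?thesis by simp
    qed
    have eC: "emeasure (T \<omega>) C = emeasure (T t1) C"
    proof -
      have "(\<integral>\<^sup>+xs. indicator C xs \<partial>T (t1 + (\<omega> - t1))) = (\<integral>\<^sup>+xs. indicator C xs \<partial>T t1)"
        unfolding T_def
      proof (rule traj_inv, intro allI impI)
        fix xs :: "assignment list" and \<sigma> assume l: "t1 < length xs"
        have e: "\<And>t. t \<le> t1 \<Longrightarrow> (xs @ [\<sigma>]) ! t = xs ! t" using l by (simp add: nth_app)
        have "xs @ [\<sigma>] \<in> C \<longleftrightarrow> xs \<in> C"
          by (auto simp: C_def e)
        then show "indicator C (xs @ [\<sigma>]) = (indicator C xs :: ennreal)"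
          by (simp add: indicator_def)
      qed
      moreover have "t1 + (\<omega> - t1) = \<omega>" using t12 t2w unfolding \<omega>_def by simp
      ultimately show ?thesis by simp
    qed
    define pHC where "pHC = measure_pmf.prob (T \<omega>) (H \<inter> C)"
    define pC where "pC = measure_pmf.prob (T \<omega>) C"
    define c where "c = 3 powr real_of_int (a - b)"
    have cpos: "0 < c" unfolding c_def by simp
    have "ennreal c * ennreal pHC \<le> ennreal pC"
      using main eHC eC unfolding pHC_def pC_def c_def
      by (simp add: measure_pmf.emeasure_eq_measure)
    moreover have pHC0: "0 \<le> pHC" unfolding pHC_def by simp
    ultimately have "ennreal (c * pHC) \<le> ennreal pC"
      using cpos by (simp add: ennreal_mult)
    moreover have "0 \<le> pC" unfolding pC_def by simp
    ultimately have cp: "c * pHC \<le> pC" by simp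
    have cond: "pHC / pC \<le> 1 / c"
    proof (cases "pC = 0")
      case True then show ?thesis using cpos by simp
    next
      case False
      then have "0 < pC" unfolding pC_def by (simp add: zero_less_measure_iff)
      then show ?thesis using cp cpos by (simp add: field_simps)
    qed
    have ab: "real_of_int (b - a) \<le> 1 - 5 * \<kappa> * real n"
      unfolding a_def b_def by linarith
    have ln3: "1 \<le> ln (3::real)"
      using exp_le by (metis ln_exp ln_le_cancel_iff exp_gt_zero zero_less_numeral)
    have "1 / c = exp (real_of_int (b - a) * ln 3)"
    proof -
      have "exp (real_of_int (b - a) * ln 3) * c = 1"
        unfolding c_def powr_def by (simp add: exp_add[symmetric] algebra_simps)
      then show ?thesis using cpos by (simp add: field_simps)
    qed
    also have "\<dots> \<le> exp (- \<kappa> * real n / 2)"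
    proof -
      have "real_of_int (b - a) * ln 3 \<le> (1 - 5 * \<kappa> * real n) * ln 3"
        using ab ln3 by (simp add: mult_right_mono)
      also have "\<dots> \<le> (1 - 5 * \<kappa> * real n) * 1"
        using ln3 kn by (intro mult_left_mono_neg) auto
      also have "\<dots> \<le> - \<kappa> * real n / 2" using kn by simp
      finally show ?thesis by simp
    qed
    finally have "pHC / pC \<le> exp (- \<kappa> * real n / 2)" using cond by linarith
    then show "cond_prob (walk_traj n k \<Phi> (nat \<lceil>exp (real n / (real k)\<^sup>2)\<rceil>))
           (Hevent n k \<Phi> \<mu> t1 t2)
           {xs. xs ! 0 \<notin> Dmist n k M \<and> xs ! t1 = \<tau>1}
         \<le> exp (- kappa k * real n / 2)"
      unfolding cond_prob_def pHC_def pC_def T_def \<omega>_def H_def C_def \<kappa>_def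
      by (simp add: Int_commute)
  qed
qed

end
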